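(* In the setting of the context, let $\mu_1,\mu_2$ be nowhere-equal solutions of $$\widehat e_1\cdot\nabla\mu=-C_{31}^{2}-\mu\big(C_{31}^{3}+C_{12}^{2}\big)-\mu^{2}C_{12}^{3}$$ and let $\alpha_1,\alpha_2$ be nowhere-vanishing functions satisfying $\widehat e_1\cdot\nabla\ln|\alpha_i/\Vert v\Vert|=C_{31}^{3}+\mu_iC_{12}^{3}$ for $i=1,2$ (so that $J_i=\alpha_i(\widehat e_2+\mu_i\widehat e_3)$ form a compatible pair of Poisson vector fields for which $\dot x=v(x)$ is locally bi-Hamiltonian). Then $$\nabla\cdot\widehat e_1=\widehat e_1\cdot\nabla\ln\left|\frac{\alpha_1\alpha_2(\mu_2-\mu_1)}{\Vert v\Vert^2}\right|.$$
   Context: Setting: $M$ is an oriented three-dimensional manifold with a Riemannian metric $g$; $\nabla$, $\nabla\cdot$, $\nabla\times$ and $\times$ denote gradient, divergence, curl and cross product. A Poisson vector field is a vector field $J$ with $J\cdot(\nabla\times J)=0$. $v$ is a nowhere vanishing vector field, $\widehat e_1=v/\Vert v\Vert$, extended to a local oriented orthonormal frame $(\widehat e_1,\widehat e_2,\widehat e_3)$ with $\widehat e_3=\widehat e_1\times\widehat e_2$, and structure functions $C_{ij}^k$ defined by $[\widehat e_i,\widehat e_j]=C_{ij}^k\widehat e_k$. *)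

theory Defs
  imports "HOL-Analysis.Analysis"
begin

text \<open>Local coordinate model: a chart U (open subset of R^3, oriented by the
coordinate orientation) of the oriented Riemannian 3-manifold; the metric is
given by its Gram matrix field g.\<close>

definition gmet :: "(real^3 \<Rightarrow> real^3^3) \<Rightarrow> real^3 \<Rightarrow> real^3 \<Rightarrow> real^3 \<Rightarrow> real" where
  "gmet g x a b = a \<bullet> (g x *v b)"

definition gnorm :: "(real^3 \<Rightarrow> real^3^3) \<Rightarrow> real^3 \<Rightarrow> real^3 \<Rightarrow> real" where
  "gnorm g x a = sqrt (gmet g x a a)"

definition riemannian_metric_on :: "(real^3) set \<Rightarrow> (real^3 \<Rightarrow> real^3^3) \<Rightarrow> bool" where
  "riemannian_metric_on U g \<longleftrightarrow> g differentiable_on U \<and>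
     (\<forall>x\<in>U. transpose (g x) = g x \<and> (\<forall>a. a \<noteq> 0 \<longrightarrow> gmet g x a a > 0))"

text \<open>Riemannian cross product: g(a \<times> b, c) = vol_g(a,b,c) = sqrt(det g) det[a b c].\<close>
definition rcross :: "(real^3 \<Rightarrow> real^3^3) \<Rightarrow> real^3 \<Rightarrow> real^3 \<Rightarrow> real^3 \<Rightarrow> real^3" where
  "rcross g x a b = sqrt (det (g x)) *\<^sub>R (matrix_inv (g x) *v cross3 a b)"

definition ddir :: "(real^3 \<Rightarrow> real) \<Rightarrow> (real^3 \<Rightarrow> real^3) \<Rightarrow> real^3 \<Rightarrow> real" where
  "ddir f X x = frechet_derivative f (at x) (X x)"

definition lie :: "(real^3 \<Rightarrow> real^3) \<Rightarrow> (real^3 \<Rightarrow> real^3) \<Rightarrow> real^3 \<Rightarrow> real^3" where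
  "lie X Y x = frechet_derivative Y (at x) (X x) - frechet_derivative X (at x) (Y x)"

definition rdiv :: "(real^3 \<Rightarrow> real^3^3) \<Rightarrow> (real^3 \<Rightarrow> real^3) \<Rightarrow> real^3 \<Rightarrow> real" where
  "rdiv g X x = (1 / sqrt (det (g x))) *
     (\<Sum>i\<in>UNIV. frechet_derivative (\<lambda>y. sqrt (det (g y)) * (X y $ i)) (at x) (axis i 1))"

end

theory Submission
  imports Defs
begin

unbundle cross3_syntax
unbundle no set_product_syntax

lemma polyid:
  fixes e1 e2 e3 :: "real^3" and P1 P2 P3 :: "3 \<Rightarrow> real^3"
  shows "(\<Sum>i\<in>UNIV. P1 i $ i * (e1 \<bullet> (e2 \<times> e3)) - e1$i * (P1 i \<bullet> (e2 \<times> e3) + e1 \<bullet> (P2 i \<times> e3) + e1 \<bullet> (e2 \<times> P3 i)))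
   = e1 \<bullet> ((\<Sum>j\<in>UNIV. e2$j *\<^sub>R P1 j - e1$j *\<^sub>R P2 j) \<times> e3) + e1 \<bullet> (e2 \<times> (\<Sum>j\<in>UNIV. e3$j *\<^sub>R P1 j - e1$j *\<^sub>R P3 j))"
  by (simp add: cross3_simps)

lemma triple_cyc: fixes a b c :: "real^3" shows "a \<bullet> (b \<times> c) = c \<bullet> (a \<times> b)"
  by (simp add: cross3_simps)

lemma inv_right: fixes A :: "real^'n^'n" assumes "invertible A" shows "A ** matrix_inv A = mat 1"
proof -
  have "\<exists>A'. A ** A' = mat 1 \<and> A' ** A = mat 1" using assms unfolding invertible_def by blast
  then show ?thesis unfolding matrix_inv_def by (rule someI2_ex) blast
qed

lemma sdet:
  fixes A :: "real^3^3" and a b c :: "real^3"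
  assumes c: "c = sqrt (det A) *\<^sub>R (matrix_inv A *v (a \<times> b))" and n: "c \<bullet> (A *v c) = 1"
  shows "sqrt (det A) * (a \<bullet> (b \<times> c)) = 1"
proof -
  define s where "s = sqrt (det A)"
  define w where "w = a \<times> b"
  define u where "u = matrix_inv A *v w"
  have cu: "c = s *\<^sub>R u" using c s_def u_def w_def by simp
  have "s \<noteq> 0"
  proof
    assume "s = 0" then have "c = 0" using cu by simp
    then show False using n by simp
  qed
  then have "det A \<noteq> 0" unfolding s_def by auto
  then have "invertible A" by (simp add: invertible_det_nz)
  then have Au: "A *v u = w" unfolding u_def by (simp add: matrix_vector_mul_assoc inv_right)
  have "c \<bullet> (A *v c) = s * s * (u \<bullet> w)" using cu Au
    by (simp add: matrix_vector_mult_scaleR)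
  moreover have "a \<bullet> (b \<times> c) = s * (u \<bullet> w)"
    by (simp add: triple_cyc[of a b c] triple_cyc[of a b u] cu w_def cross_mult_right)
  ultimately show ?thesis using n s_def by (simp add: mult.assoc[symmetric])
qed

lemma lin_expand:
  fixes f :: "real^3 \<Rightarrow> real^3"
  assumes "bounded_linear f"
  shows "f h = (\<Sum>j\<in>UNIV. h$j *\<^sub>R f (axis j 1))"
proof -
  interpret linear f using assms bounded_linear.linear by blast
  have "f h = f (\<Sum>j\<in>UNIV. h$j *\<^sub>R axis j 1)"
    using basis_expansion[of h] by (simp add: scalar_mult_eq_scaleR)
  also have "\<dots> = (\<Sum>j\<in>UNIV. h$j *\<^sub>R f (axis j 1))" by (simp add: sum scale)
  finally show ?thesis .
qed

lemma ln_abs_deriv: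
  fixes h :: "real^3 \<Rightarrow> real"
  assumes "(h has_derivative h') (at x)" "h x \<noteq> 0"
  shows "((\<lambda>y. ln \<bar>h y\<bar>) has_derivative (\<lambda>t. h' t / h x)) (at x)"
proof -
  have eq: "ln \<bar>t\<bar> = ln (t * t) / 2" for t :: real
  proof (cases "t = 0")
    case False
    have 1: "ln (\<bar>t\<bar> * \<bar>t\<bar>) = ln \<bar>t\<bar> + ln \<bar>t\<bar>" by (rule ln_mult_pos) (use False in auto)
    have 2: "\<bar>t\<bar> * \<bar>t\<bar> = t * t" by simp
    show ?thesis using 1 unfolding 2 by simp
  qed simp
  have pos: "h x * h x > 0" using assms(2) by (auto simp add: zero_less_mult_iff linorder_neq_iff)
  have "((\<lambda>y. ln (h y * h y) / 2) has_derivative (\<lambda>t. h' t / h x)) (at x)"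
    using assms pos
    by (auto intro!: derivative_eq_intros simp: field_simps)
  then show ?thesis by (simp add: eq)
qed

lemma dat_lem: "open U \<Longrightarrow> x \<in> U \<Longrightarrow> f differentiable_on U \<Longrightarrow> f differentiable at x"
  using differentiable_on_eq_differentiable_at by blast

lemma comp_diff: fixes f :: "real^3 \<Rightarrow> 'a::real_normed_vector^'n" assumes "f differentiable at x"
  shows "(\<lambda>y. f y $ i) differentiable at x"
proof -
  obtain f' where "(f has_derivative f') (at x)" using assms by (auto simp: differentiable_def)
  from bounded_linear.has_derivative[OF bounded_linear_vec_nth this]
  show ?thesis by (auto simp: differentiable_def)
qed

theorem lemma1:
  fixes U :: "(real^3) set" and g :: "real^3 \<Rightarrow> real^3^3"
    and v :: "real^3 \<Rightarrow> real^3" and E :: "nat \<Rightarrow> real^3 \<Rightarrow> real^3"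
    and C :: "nat \<Rightarrow> nat \<Rightarrow> nat \<Rightarrow> real^3 \<Rightarrow> real"
    and \<mu>1 \<mu>2 \<alpha>1 \<alpha>2 :: "real^3 \<Rightarrow> real"
  assumes U_open: "open U"
    and metric: "riemannian_metric_on U g"
    and v_diff: "v differentiable_on U" and v_nz: "\<forall>x\<in>U. v x \<noteq> 0"
    and E_diff: "\<forall>i\<in>{1,2,3}. E i differentiable_on U"
    and E1: "\<forall>x\<in>U. E 1 x = (1 / gnorm g x (v x)) *\<^sub>R v x"
    and E_orth: "\<forall>x\<in>U. \<forall>i\<in>{1,2,3}. \<forall>j\<in>{1,2,3}.
                   gmet g x (E i x) (E j x) = (if i = j then 1 else 0)"
    and E3: "\<forall>x\<in>U. E 3 x = rcross g x (E 1 x) (E 2 x)"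
    and C_def: "\<forall>x\<in>U. \<forall>i\<in>{1,2,3}. \<forall>j\<in>{1,2,3}.
                  lie (E i) (E j) x = (\<Sum>k\<in>{1,2,3}. C i j k x *\<^sub>R E k x)"
    and \<mu>_diff: "\<mu>1 differentiable_on U" "\<mu>2 differentiable_on U"
    and \<mu>1_eq: "\<forall>x\<in>U. ddir \<mu>1 (E 1) x
                 = - C 3 1 2 x - \<mu>1 x * (C 3 1 3 x + C 1 2 2 x) - (\<mu>1 x)\<^sup>2 * C 1 2 3 x"
    and \<mu>2_eq: "\<forall>x\<in>U. ddir \<mu>2 (E 1) x
                 = - C 3 1 2 x - \<mu>2 x * (C 3 1 3 x + C 1 2 2 x) - (\<mu>2 x)\<^sup>2 * C 1 2 3 x"
    and \<mu>_ne: "\<forall>x\<in>U. \<mu>1 x \<noteq> \<mu>2 x"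
    and \<alpha>_diff: "\<alpha>1 differentiable_on U" "\<alpha>2 differentiable_on U"
    and \<alpha>_nz: "\<forall>x\<in>U. \<alpha>1 x \<noteq> 0" "\<forall>x\<in>U. \<alpha>2 x \<noteq> 0"
    and \<alpha>1_eq: "\<forall>x\<in>U. ddir (\<lambda>y. ln \<bar>\<alpha>1 y / gnorm g y (v y)\<bar>) (E 1) x
                 = C 3 1 3 x + \<mu>1 x * C 1 2 3 x"
    and \<alpha>2_eq: "\<forall>x\<in>U. ddir (\<lambda>y. ln \<bar>\<alpha>2 y / gnorm g y (v y)\<bar>) (E 1) x
                 = C 3 1 3 x + \<mu>2 x * C 1 2 3 x"
  shows "\<forall>x\<in>U. rdiv g (E 1) x
           = ddir (\<lambda>y. ln \<bar>\<alpha>1 y * \<alpha>2 y * (\<mu>2 y - \<mu>1 y) / (gnorm g y (v y))\<^sup>2\<bar>) (E 1) x"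
proof
  fix x assume xU: "x \<in> U"
  define e where "e k = E k x" for k :: nat
  define Ed where "Ed k = frechet_derivative (E k) (at x)" for k :: nat
  have hasE: "(E k has_derivative Ed k) (at x)" if "k \<in> {1,2,3}" for k
  proof -
    have "E k differentiable at x" using E_diff that xU U_open differentiable_on_eq_differentiable_at by blast
    then show ?thesis unfolding Ed_def using frechet_derivative_works by blast
  qed
  have hasE1: "(E 1 has_derivative Ed 1) (at x)" and hasE2: "(E 2 has_derivative Ed 2) (at x)"
    and hasE3: "(E 3 has_derivative Ed 3) (at x)" using hasE by auto
  have blE: "bounded_linear (Ed k)" if "k \<in> {1,2,3}" for k
    using hasE[OF that] has_derivative_bounded_linear by blast
  define P where "P k j = Ed k (axis j 1)" for k :: nat and j :: 3
  have Edexp: "Ed k h = (\<Sum>j\<in>UNIV. h$j *\<^sub>R P k j)" if "k \<in> {1,2,3}" for k h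
    unfolding P_def by (rule lin_expand[OF blE[OF that]])
  define D where "D y = E 1 y \<bullet> (E 2 y \<times> E 3 y)" for y
  define D' where "D' t = Ed 1 t \<bullet> (e 2 \<times> e 3) + e 1 \<bullet> (Ed 2 t \<times> e 3 + e 2 \<times> Ed 3 t)" for t
  have bbc: "bounded_bilinear cross3" using bilinear_cross bilinear_conv_bounded_bilinear by blast
  have hasD: "(D has_derivative D') (at x)"
    using has_derivative_inner[OF hasE1 bounded_bilinear.FDERIV[OF bbc hasE2 hasE3]]
    unfolding D_def[abs_def] D'_def[abs_def] e_def
    by (rule has_derivative_eq_rhs) (simp add: fun_eq_iff add.commute)
  have sD: "sqrt (det (g y)) * D y = 1" if yU: "y \<in> U" for y
  proof -
    have c: "E 3 y = sqrt (det (g y)) *\<^sub>R (matrix_inv (g y) *v (E 1 y \<times> E 2 y))"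
      using E3 yU unfolding rcross_def by blast
    have n: "E 3 y \<bullet> (g y *v E 3 y) = 1" using E_orth yU unfolding gmet_def by fastforce
    show ?thesis unfolding D_def by (rule sdet[OF c n])
  qed
  have sD': "sqrt (det (g y)) = 1 / D y" "D y \<noteq> 0" if "y \<in> U" for y
  proof -
    have h: "sqrt (det (g y)) * D y = 1" by (rule sD[OF that])
    then show "D y \<noteq> 0" by auto
    then show "sqrt (det (g y)) = 1 / D y" using h by (simp add: eq_divide_eq)
  qed
  have Dx: "D x \<noteq> 0" using sD' xU by blast
  have fd: "frechet_derivative (\<lambda>y. sqrt (det (g y)) * (E 1 y $ i)) (at x)
      = (\<lambda>t. (Ed 1 t $ i * D x - E 1 x $ i * D' t) / (D x * D x))" for i
  proof -
    have c1: "((\<lambda>y. E 1 y $ i) has_derivative (\<lambda>t. Ed 1 t $ i)) (at x)"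
      by (rule bounded_linear.has_derivative[OF bounded_linear_vec_nth hasE1])
    have "((\<lambda>y. E 1 y $ i / D y) has_derivative (\<lambda>t. (Ed 1 t $ i * D x - E 1 x $ i * D' t) / (D x * D x))) (at x)"
      by (rule has_derivative_divide'[OF c1 hasD Dx])
    then have "((\<lambda>y. sqrt (det (g y)) * (E 1 y $ i)) has_derivative (\<lambda>t. (Ed 1 t $ i * D x - E 1 x $ i * D' t) / (D x * D x))) (at x)"
      by (rule has_derivative_transform_within_open[OF _ U_open xU]) (simp add: sD')
    then show ?thesis by (rule frechet_derivative_at[symmetric])
  qed
  define L2 where "L2 = (\<Sum>j\<in>UNIV. e 2$j *\<^sub>R P 1 j - e 1$j *\<^sub>R P 2 j)"
  define L3 where "L3 = (\<Sum>j\<in>UNIV. e 3$j *\<^sub>R P 1 j - e 1$j *\<^sub>R P 3 j)"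
  have "rdiv g (E 1) x = D x * (\<Sum>i\<in>UNIV. (P 1 i $ i * D x - e 1 $ i * D' (axis i 1)) / (D x * D x))"
    unfolding rdiv_def fd P_def e_def using sD' xU by simp
  also have "\<dots> = (\<Sum>i\<in>UNIV. P 1 i $ i * D x - e 1 $ i * D' (axis i 1)) / D x"
    using Dx by (simp add: sum_divide_distrib[symmetric])
  also have "(\<Sum>i\<in>UNIV. P 1 i $ i * D x - e 1 $ i * D' (axis i 1)) = e 1 \<bullet> (L2 \<times> e 3) + e 1 \<bullet> (e 2 \<times> L3)"
    unfolding L2_def L3_def D_def D'_def P_def[symmetric] e_def[symmetric]
    using polyid[of "P 1" "e 1" "e 2" "e 3" "P 2" "P 3"] by (simp only: inner_add_right add.assoc)
  finally have rd: "rdiv g (E 1) x = (e 1 \<bullet> (L2 \<times> e 3) + e 1 \<bullet> (e 2 \<times> L3)) / D x" .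
  have lie21: "lie (E 2) (E 1) x = L2"
    unfolding lie_def L2_def Ed_def[symmetric] e_def[symmetric] using Edexp by (simp add: sum_subtractf)
  have lie31: "lie (E 3) (E 1) x = L3"
    unfolding lie_def L3_def Ed_def[symmetric] e_def[symmetric] using Edexp by (simp add: sum_subtractf)
  have lie12: "lie (E 1) (E 2) x = - L2"
    using lie21 unfolding lie_def by (simp add: algebra_simps)
  have Dxe: "D x = e 1 \<bullet> (e 2 \<times> e 3)" unfolding D_def e_def ..
  have c212: "e 1 \<bullet> (L2 \<times> e 3) = C 2 1 2 x * D x"
    using C_def xU unfolding lie21[symmetric] Dxe
    by (simp add: e_def cross_add_left cross_mult_left inner_add_right dot_cross_self)
  have c313: "e 1 \<bullet> (e 2 \<times> L3) = C 3 1 3 x * D x"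
    using C_def xU unfolding lie31[symmetric] Dxe
    by (simp add: e_def cross_add_right cross_mult_right inner_add_right dot_cross_self)
  have c122: "e 1 \<bullet> ((- L2) \<times> e 3) = C 1 2 2 x * D x"
    using C_def xU unfolding lie12[symmetric] Dxe
    by (simp add: e_def cross_add_left cross_mult_left inner_add_right dot_cross_self)
  have "C 1 2 2 x * D x = (- C 2 1 2 x) * D x" using c122 c212 by simp
  then have C122: "C 1 2 2 x = - C 2 1 2 x" using Dx mult_right_cancel by blast
  have LHS: "rdiv g (E 1) x = C 3 1 3 x - C 1 2 2 x"
  proof -
    have "rdiv g (E 1) x = (C 2 1 2 x + C 3 1 3 x) * D x / D x" unfolding rd c212 c313 by (simp add: algebra_simps)
    also have "\<dots> = C 2 1 2 x + C 3 1 3 x" using Dx by simp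
    finally show ?thesis using C122 by simp
  qed
  show "rdiv g (E 1) x
           = ddir (\<lambda>y. ln \<bar>\<alpha>1 y * \<alpha>2 y * (\<mu>2 y - \<mu>1 y) / (gnorm g y (v y))\<^sup>2\<bar>) (E 1) x"
  proof -
    have gpos: "\<forall>a. a \<noteq> 0 \<longrightarrow> gmet g y a a > 0" if "y \<in> U" for y
      using metric that unfolding riemannian_metric_on_def by blast
    have Npos: "gnorm g y (v y) > 0" if "y \<in> U" for y
      using gpos[OF that] v_nz that unfolding gnorm_def by simp
    note dat = dat_lem[OF U_open xU]
    have vd: "v differentiable at x" by (rule dat[OF v_diff])
    have gd: "g differentiable at x" using dat metric unfolding riemannian_metric_on_def by blast
    have Qd: "(\<lambda>y. gmet g y (v y) (v y)) differentiable at x"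
      unfolding gmet_def inner_vec_def matrix_vector_mult_def
      by (simp, auto intro!: differentiable_sum differentiable_mult comp_diff vd gd)
    obtain Q' where Q': "((\<lambda>y. gmet g y (v y) (v y)) has_derivative Q') (at x)"
      using Qd by (auto simp: differentiable_def)
    have Qx: "gmet g x (v x) (v x) > 0" using gpos[OF xU] v_nz xU by blast
    have Nd: "(\<lambda>y. gnorm g y (v y)) differentiable at x"
    proof -
      have "((\<lambda>y. sqrt (gmet g y (v y) (v y))) has_derivative (\<lambda>t. Q' t * (inverse (sqrt (gmet g x (v x) (v x))) / 2))) (at x)"
        using Q' Qx by (auto intro!: derivative_eq_intros)
      then show ?thesis unfolding gnorm_def differentiable_def by blast
    qed
    have hd1: "(\<lambda>y. \<alpha>1 y / gnorm g y (v y)) differentiable at x"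
      using dat[OF \<alpha>_diff(1)] Nd Npos[OF xU] by (intro differentiable_divide) auto
    have hd2: "(\<lambda>y. \<alpha>2 y / gnorm g y (v y)) differentiable at x"
      using dat[OF \<alpha>_diff(2)] Nd Npos[OF xU] by (intro differentiable_divide) auto
    define H1 where "H1 = frechet_derivative (\<lambda>y. \<alpha>1 y / gnorm g y (v y)) (at x)"
    define H2 where "H2 = frechet_derivative (\<lambda>y. \<alpha>2 y / gnorm g y (v y)) (at x)"
    define M1 where "M1 = frechet_derivative \<mu>1 (at x)"
    define M2 where "M2 = frechet_derivative \<mu>2 (at x)"
    have hH1: "((\<lambda>y. \<alpha>1 y / gnorm g y (v y)) has_derivative H1) (at x)"
      using hd1 frechet_derivative_works H1_def by blast
    have hH2: "((\<lambda>y. \<alpha>2 y / gnorm g y (v y)) has_derivative H2) (at x)"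
      using hd2 frechet_derivative_works H2_def by blast
    have hM1: "(\<mu>1 has_derivative M1) (at x)"
      using dat[OF \<mu>_diff(1)] frechet_derivative_works M1_def by blast
    have hM2: "(\<mu>2 has_derivative M2) (at x)"
      using dat[OF \<mu>_diff(2)] frechet_derivative_works M2_def by blast
    have h1x: "\<alpha>1 x / gnorm g x (v x) \<noteq> 0" using \<alpha>_nz xU Npos[OF xU] by simp
    have h2x: "\<alpha>2 x / gnorm g x (v x) \<noteq> 0" using \<alpha>_nz xU Npos[OF xU] by simp
    have h3x: "\<mu>2 x - \<mu>1 x \<noteq> 0" using \<mu>_ne xU by auto
    have l1: "((\<lambda>y. ln \<bar>\<alpha>1 y / gnorm g y (v y)\<bar>) has_derivative (\<lambda>t. H1 t / (\<alpha>1 x / gnorm g x (v x)))) (at x)"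
      by (rule ln_abs_deriv[OF hH1 h1x])
    have l2: "((\<lambda>y. ln \<bar>\<alpha>2 y / gnorm g y (v y)\<bar>) has_derivative (\<lambda>t. H2 t / (\<alpha>2 x / gnorm g x (v x)))) (at x)"
      by (rule ln_abs_deriv[OF hH2 h2x])
    have l3: "((\<lambda>y. ln \<bar>\<mu>2 y - \<mu>1 y\<bar>) has_derivative (\<lambda>t. (M2 t - M1 t) / (\<mu>2 x - \<mu>1 x))) (at x)"
      by (rule ln_abs_deriv[OF has_derivative_diff[OF hM2 hM1] h3x])
    have lsum: "((\<lambda>y. ln \<bar>\<alpha>1 y / gnorm g y (v y)\<bar> + ln \<bar>\<alpha>2 y / gnorm g y (v y)\<bar> + ln \<bar>\<mu>2 y - \<mu>1 y\<bar>)
       has_derivative (\<lambda>t. H1 t / (\<alpha>1 x / gnorm g x (v x)) + H2 t / (\<alpha>2 x / gnorm g x (v x)) + (M2 t - M1 t) / (\<mu>2 x - \<mu>1 x))) (at x)"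
      by (intro has_derivative_add l1 l2 l3)
    have eqU: "ln \<bar>\<alpha>1 y / gnorm g y (v y)\<bar> + ln \<bar>\<alpha>2 y / gnorm g y (v y)\<bar> + ln \<bar>\<mu>2 y - \<mu>1 y\<bar>
        = ln \<bar>\<alpha>1 y * \<alpha>2 y * (\<mu>2 y - \<mu>1 y) / (gnorm g y (v y))\<^sup>2\<bar>" if yU: "y \<in> U" for y
    proof -
      have a1: "\<bar>\<alpha>1 y / gnorm g y (v y)\<bar> > 0" using \<alpha>_nz yU Npos[OF yU] by simp
      have a2: "\<bar>\<alpha>2 y / gnorm g y (v y)\<bar> > 0" using \<alpha>_nz yU Npos[OF yU] by simp
      have a3: "\<bar>\<mu>2 y - \<mu>1 y\<bar> > 0" using \<mu>_ne yU by auto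
      have "\<bar>\<alpha>1 y * \<alpha>2 y * (\<mu>2 y - \<mu>1 y) / (gnorm g y (v y))\<^sup>2\<bar>
          = \<bar>\<alpha>1 y / gnorm g y (v y)\<bar> * \<bar>\<alpha>2 y / gnorm g y (v y)\<bar> * \<bar>\<mu>2 y - \<mu>1 y\<bar>"
        by (simp add: abs_mult power2_eq_square)
      moreover have "ln (\<bar>\<alpha>1 y / gnorm g y (v y)\<bar> * \<bar>\<alpha>2 y / gnorm g y (v y)\<bar> * \<bar>\<mu>2 y - \<mu>1 y\<bar>)
          = ln \<bar>\<alpha>1 y / gnorm g y (v y)\<bar> + ln \<bar>\<alpha>2 y / gnorm g y (v y)\<bar> + ln \<bar>\<mu>2 y - \<mu>1 y\<bar>"
        using a1 a2 a3 by (simp only: ln_mult_pos mult_pos_pos)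
      ultimately show ?thesis by simp
    qed
    have lF: "((\<lambda>y. ln \<bar>\<alpha>1 y * \<alpha>2 y * (\<mu>2 y - \<mu>1 y) / (gnorm g y (v y))\<^sup>2\<bar>)
       has_derivative (\<lambda>t. H1 t / (\<alpha>1 x / gnorm g x (v x)) + H2 t / (\<alpha>2 x / gnorm g x (v x)) + (M2 t - M1 t) / (\<mu>2 x - \<mu>1 x))) (at x)"
      by (rule has_derivative_transform_within_open[OF lsum U_open xU]) (rule eqU)
    have d1: "H1 (E 1 x) / (\<alpha>1 x / gnorm g x (v x)) = C 3 1 3 x + \<mu>1 x * C 1 2 3 x"
      using \<alpha>1_eq xU frechet_derivative_at[OF l1] unfolding ddir_def by metis
    have d2: "H2 (E 1 x) / (\<alpha>2 x / gnorm g x (v x)) = C 3 1 3 x + \<mu>2 x * C 1 2 3 x"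
      using \<alpha>2_eq xU frechet_derivative_at[OF l2] unfolding ddir_def by metis
    have m1: "M1 (E 1 x) = - C 3 1 2 x - \<mu>1 x * (C 3 1 3 x + C 1 2 2 x) - (\<mu>1 x)\<^sup>2 * C 1 2 3 x"
      using \<mu>1_eq xU unfolding ddir_def M1_def by blast
    have m2: "M2 (E 1 x) = - C 3 1 2 x - \<mu>2 x * (C 3 1 3 x + C 1 2 2 x) - (\<mu>2 x)\<^sup>2 * C 1 2 3 x"
      using \<mu>2_eq xU unfolding ddir_def M2_def by blast
    have "ddir (\<lambda>y. ln \<bar>\<alpha>1 y * \<alpha>2 y * (\<mu>2 y - \<mu>1 y) / (gnorm g y (v y))\<^sup>2\<bar>) (E 1) x
       = (C 3 1 3 x + \<mu>1 x * C 1 2 3 x) + (C 3 1 3 x + \<mu>2 x * C 1 2 3 x) + (M2 (E 1 x) - M1 (E 1 x)) / (\<mu>2 x - \<mu>1 x)"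
      unfolding ddir_def frechet_derivative_at[OF lF, symmetric] d1[symmetric] d2[symmetric] ..
    also have "(M2 (E 1 x) - M1 (E 1 x)) = (\<mu>2 x - \<mu>1 x) * (- (C 3 1 3 x + C 1 2 2 x) - (\<mu>2 x + \<mu>1 x) * C 1 2 3 x)"
      unfolding m1 m2 by (simp add: algebra_simps power2_eq_square)
    finally have R: "ddir (\<lambda>y. ln \<bar>\<alpha>1 y * \<alpha>2 y * (\<mu>2 y - \<mu>1 y) / (gnorm g y (v y))\<^sup>2\<bar>) (E 1) x
       = (C 3 1 3 x + \<mu>1 x * C 1 2 3 x) + (C 3 1 3 x + \<mu>2 x * C 1 2 3 x) + (\<mu>2 x - \<mu>1 x) * (- (C 3 1 3 x + C 1 2 2 x) - (\<mu>2 x + \<mu>1 x) * C 1 2 3 x) / (\<mu>2 x - \<mu>1 x)" .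
    have "(\<mu>2 x - \<mu>1 x) * (- (C 3 1 3 x + C 1 2 2 x) - (\<mu>2 x + \<mu>1 x) * C 1 2 3 x) / (\<mu>2 x - \<mu>1 x)
        = - (C 3 1 3 x + C 1 2 2 x) - (\<mu>2 x + \<mu>1 x) * C 1 2 3 x" using h3x by simp
    then show ?thesis unfolding R LHS by (simp add: algebra_simps)
  qed
qed

end
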